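(* Let $(a,b)$ be a bounded interval of $\mathbb R$ and $v\in H^1((a,b))$, identified with its continuous extension to $[a,b]$. Let $v_0=\min_{[a,b]}v$, $v_1=\max_{[a,b]}v$, and $\tilde I=\{s\in[a,b]: v_0<v(s)<v_1\}$. Then $$\int_{\tilde I}\big(v(s)-v_0\big)^2\,ds\le|\tilde I|^2\int_{\tilde I}(v'(s))^2\,ds,$$ where $|\tilde I|$ is the Lebesgue measure of $\tilde I$. *)

theory Defs
  imports "HOL-Analysis.Analysis"
begin

definition test_fun :: "real \<Rightarrow> real \<Rightarrow> (real \<Rightarrow> real) \<Rightarrow> bool" where
  "test_fun a b \<phi> \<longleftrightarrow>
     (\<forall>k x. ((deriv ^^ k) \<phi>) differentiable (at x)) \<and>
     (\<exists>c d. a < c \<and> d < b \<and> (\<forall>x. x \<notin> {c..d} \<longrightarrow> \<phi> x = 0))"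

definition L2_on :: "real set \<Rightarrow> (real \<Rightarrow> real) \<Rightarrow> bool" where
  "L2_on S f \<longleftrightarrow> set_borel_measurable lborel S f \<and>
                   set_integrable lborel S (\<lambda>x. (f x)\<^sup>2)"

definition H1_weak_deriv :: "real \<Rightarrow> real \<Rightarrow> (real \<Rightarrow> real) \<Rightarrow> (real \<Rightarrow> real) \<Rightarrow> bool" where
  "H1_weak_deriv a b v g \<longleftrightarrow>
     L2_on {a<..<b} v \<and> L2_on {a<..<b} g \<and>
     (\<forall>\<phi>. test_fun a b \<phi> \<longrightarrow>
        (LINT x:{a<..<b}|lborel. v x * deriv \<phi> x) = - (LINT x:{a<..<b}|lborel. g x * \<phi> x))"

end

theory Submission
  imports Defs "HOL-Computational_Algebra.Polynomial"
begin

coinductive smooth :: "(real \<Rightarrow> real) \<Rightarrow> bool" where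
  smoothI: "(\<And>x. (f has_real_derivative f' x) (at x)) \<Longrightarrow> smooth f' \<Longrightarrow> smooth f"

lemma smooth_deriv:
  assumes "smooth f" shows "smooth (deriv f)" "\<And>x. f differentiable (at x)"
proof -
  from assms obtain f' where d: "\<And>x. (f has_real_derivative f' x) (at x)" and s: "smooth f'"
    by (cases rule: smooth.cases) blast
  have "deriv f = f'" using d by (auto intro!: ext DERIV_imp_deriv)
  with s show "smooth (deriv f)" by simp
  show "\<And>x. f differentiable (at x)" using d real_differentiable_def by blast
qed

lemma smooth_iter: "smooth f \<Longrightarrow> smooth ((deriv ^^ k) f)"
  by (induction k) (auto intro: smooth_deriv)

lemma smooth_test_diff: "smooth f \<Longrightarrow> ((deriv ^^ k) f) differentiable (at x)"
  using smooth_iter smooth_deriv(2) by blast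

inductive_set alg :: "(real \<Rightarrow> real) set \<Rightarrow> (real \<Rightarrow> real) set" for B where
  base: "g \<in> B \<Longrightarrow> g \<in> alg B"
| sm: "smooth g \<Longrightarrow> g \<in> alg B"
| add: "g \<in> alg B \<Longrightarrow> h \<in> alg B \<Longrightarrow> (\<lambda>x. g x + h x) \<in> alg B"
| mult: "g \<in> alg B \<Longrightarrow> h \<in> alg B \<Longrightarrow> (\<lambda>x. g x * h x) \<in> alg B"

lemma alg_deriv:
  assumes B: "\<And>g. g \<in> B \<Longrightarrow> \<exists>g'. (\<forall>x. (g has_real_derivative g' x) (at x)) \<and> g' \<in> alg B"
  assumes "f \<in> alg B"
  shows "\<exists>f'. (\<forall>x. (f has_real_derivative f' x) (at x)) \<and> f' \<in> alg B"
  using assms(2)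
proof induction
  case (base g) then show ?case using B by blast
next
  case (sm g)
  then obtain f' where d: "\<And>x. (g has_real_derivative f' x) (at x)" and s: "smooth f'"
    by (cases rule: smooth.cases) blast
  then show ?case by (intro exI[of _ f']) (auto intro: alg.sm)
next
  case (add g h)
  then obtain g' h' where "\<forall>x. (g has_real_derivative g' x) (at x)" "g' \<in> alg B"
     "\<forall>x. (h has_real_derivative h' x) (at x)" "h' \<in> alg B" by blast
  then show ?case by (intro exI[of _ "\<lambda>x. g' x + h' x"]) (auto intro!: derivative_eq_intros alg.add)
next
  case (mult g h)
  then obtain g' h' where "\<forall>x. (g has_real_derivative g' x) (at x)" "g' \<in> alg B"
     "\<forall>x. (h has_real_derivative h' x) (at x)" "h' \<in> alg B" by blast
  then show ?case
    by (intro exI[of _ "\<lambda>x. g' x * h x + g x * h' x"])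
       (auto intro!: derivative_eq_intros alg.add alg.mult mult.hyps)
qed

lemma alg_smooth:
  assumes B: "\<And>g. g \<in> B \<Longrightarrow> \<exists>g'. (\<forall>x. (g has_real_derivative g' x) (at x)) \<and> g' \<in> alg B"
  assumes "f \<in> alg B"
  shows "smooth f"
  using assms(2)
proof (coinduction arbitrary: f rule: smooth.coinduct)
  case (smooth f)
  then show ?case using alg_deriv[OF B] by blast
qed

lemma smooth_mult: "smooth f \<Longrightarrow> smooth g \<Longrightarrow> smooth (\<lambda>x. f x * g x)"
  by (rule alg_smooth[where B="{}"]) (auto intro: alg.intros)

lemma smooth_add: "smooth f \<Longrightarrow> smooth g \<Longrightarrow> smooth (\<lambda>x. f x + g x)"
  by (rule alg_smooth[where B="{}"]) (auto intro: alg.intros)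

lemma smooth_const: "smooth (\<lambda>x. c)"
proof (rule smooth.coinduct[where X="\<lambda>f. \<exists>c. f = (\<lambda>x. c)"])
  fix f :: "real \<Rightarrow> real" assume "\<exists>c. f = (\<lambda>x. c)"
  then obtain c where "f = (\<lambda>x. c)" by blast
  then show "\<exists>f0 f'. f = f0 \<and> (\<forall>x. (f0 has_real_derivative f' x) (at x)) \<and>
     ((\<exists>c. f' = (\<lambda>x. c)) \<or> smooth f')"
    by (intro exI[of _ f] exI[of _ "\<lambda>x. 0"]) auto
qed auto

lemma smooth_diff: "smooth f \<Longrightarrow> smooth g \<Longrightarrow> smooth (\<lambda>x. f x - g x)"
  using smooth_add[OF _ smooth_mult[OF smooth_const[of "-1"]], of f g] by simp

lemma smooth_inverse:
  assumes f: "smooth f" and nz: "\<And>x. f x \<noteq> 0"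
  shows "smooth (\<lambda>x. inverse (f x))"
proof (rule alg_smooth[where B="{\<lambda>x. inverse (f x)}"])
  fix g assume "g \<in> {\<lambda>x. inverse (f x)}"
  then have g: "g = (\<lambda>x. inverse (f x))" by simp
  from f obtain f' where d: "\<And>x. (f has_real_derivative f' x) (at x)" and s: "smooth f'"
    by (cases rule: smooth.cases) blast
  have "(g has_real_derivative ((-1) * f' x) * (inverse (f x) * inverse (f x))) (at x)" for x
    unfolding g using d[of x] nz[of x]
    by (auto intro!: derivative_eq_intros simp: power2_eq_square field_simps)
  moreover have "(\<lambda>x. ((-1) * f' x) * (inverse (f x) * inverse (f x))) \<in> alg {\<lambda>x. inverse (f x)}"
    by (intro alg.mult alg.sm alg.base smooth_mult smooth_const s) auto
  ultimately show "\<exists>g'. (\<forall>x. (g has_real_derivative g' x) (at x)) \<and> g' \<in> alg {\<lambda>x. inverse (f x)}"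
    by (intro exI[of _ "\<lambda>x. ((-1) * f' x) * (inverse (f x) * inverse (f x))"]) auto
qed (auto intro: alg.base)

lemma smooth_affine_aux: "smooth f \<Longrightarrow> smooth (\<lambda>x. k * f (c * x + d))"
proof (coinduction arbitrary: f k rule: smooth.coinduct)
  case (smooth f k)
  from smooth(1) obtain f' where d: "\<And>x. (f has_real_derivative f' x) (at x)" and s: "smooth f'"
    by (cases rule: smooth.cases) blast
  have "((\<lambda>x. k * f (c * x + d)) has_real_derivative (k * c) * f' (c * x + d)) (at x)" for x
    using d by (auto intro!: derivative_eq_intros DERIV_chain2[OF d] simp: field_simps)
  then show ?case using s
    by (intro exI[of _ "\<lambda>x. k * f (c * x + d)"] exI[of _ "\<lambda>x. (k * c) * f' (c * x + d)"]) auto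
qed

lemma smooth_affine: "smooth f \<Longrightarrow> smooth (\<lambda>x. f (c * x + d))"
  using smooth_affine_aux[of f 1] by simp

definition hP :: "real poly \<Rightarrow> real \<Rightarrow> real" where
  "hP P x = (if x > 0 then poly P (inverse x) * exp (- inverse x) else 0)"

lemma hP_lim_top: "((\<lambda>u. poly (P::real poly) u * exp (- u) * u) \<longlongrightarrow> 0) at_top"
proof -
  have eq: "poly P u * exp (- u) * u = (\<Sum>i\<le>degree P. coeff P i * (u ^ Suc i / exp u))" for u :: real
    unfolding poly_altdef exp_minus by (simp add: sum_distrib_left sum_distrib_right divide_inverse mult_ac)
  have "((\<lambda>u. \<Sum>i\<le>degree P. coeff P i * (u ^ Suc i / exp u)) \<longlongrightarrow> (\<Sum>i\<le>degree P. coeff P i * 0)) at_top"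
    by (intro tendsto_sum tendsto_mult tendsto_const tendsto_power_div_exp_0)
  then show ?thesis by (simp add: eq)
qed

lemma hP_deriv0: "(hP P has_real_derivative 0) (at 0)"
  unfolding DERIV_def
proof (rule filterlim_split_at)
  have "\<forall>\<^sub>F h in at_left 0. h < (0::real)" by (simp add: eventually_at_filter)
  then have "\<forall>\<^sub>F h in at_left 0. 0 = (hP P (0 + h) - hP P 0) / h"
    by eventually_elim (simp add: hP_def)
  then show "((\<lambda>h. (hP P (0 + h) - hP P 0) / h) \<longlongrightarrow> 0) (at_left 0)"
    by (rule Lim_transform_eventually[OF tendsto_const])
next
  have "((\<lambda>u. (hP P (0 + inverse u) - hP P 0) / inverse u) \<longlongrightarrow> 0) at_top"
  proof (rule Lim_transform_eventually[OF hP_lim_top])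
    show "\<forall>\<^sub>F u in at_top. poly P u * exp (- u) * u = (hP P (0 + inverse u) - hP P 0) / inverse u"
      using eventually_gt_at_top[of 0] by eventually_elim (simp add: hP_def divide_inverse)
  qed
  then show "((\<lambda>h. (hP P (0 + h) - hP P 0) / h) \<longlongrightarrow> 0) (at_right 0)"
    by (simp add: filterlim_at_right_to_top)
qed

lemma hP_deriv: "(hP P has_real_derivative hP ([:0,0,1:] * (P - pderiv P)) x) (at x)"
proof -
  consider "x > 0" | "x < 0" | "x = 0" by linarith
  then show ?thesis
  proof cases
    case 1
    have "((\<lambda>x. poly P (inverse x) * exp (- inverse x)) has_real_derivative
       poly (pderiv P) (inverse x) * (- (inverse x ^ 2)) * exp (- inverse x)
        + poly P (inverse x) * (exp (- inverse x) * (inverse x ^ 2))) (at x)"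
      using 1 by (auto intro!: derivative_eq_intros DERIV_chain2[OF poly_DERIV] simp: power2_eq_square field_simps)
    also have "poly (pderiv P) (inverse x) * (- (inverse x ^ 2)) * exp (- inverse x)
        + poly P (inverse x) * (exp (- inverse x) * (inverse x ^ 2)) = hP ([:0,0,1:] * (P - pderiv P)) x"
      using 1 by (simp add: hP_def poly_pCons algebra_simps power2_eq_square)
    finally show ?thesis
      by (rule has_field_derivative_transform_within_open[where S="{0<..}"]) (use 1 in \<open>auto simp: hP_def\<close>)
  next
    case 2
    have "((\<lambda>x. 0) has_real_derivative 0) (at x)" by simp
    then have "((\<lambda>x. 0) has_real_derivative hP ([:0,0,1:] * (P - pderiv P)) x) (at x)"
      using 2 by (simp add: hP_def)
    then show ?thesis
      by (rule has_field_derivative_transform_within_open[where S="{..<0}"]) (use 2 in \<open>auto simp: hP_def\<close>)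
  next
    case 3
    then show ?thesis using hP_deriv0[of P] by (simp add: hP_def)
  qed
qed

lemma smooth_hP: "smooth (hP P)"
proof (rule smooth.coinduct[where X="\<lambda>f. \<exists>P. f = hP P"])
  fix f :: "real \<Rightarrow> real" assume "\<exists>P. f = hP P"
  then obtain P where "f = hP P" by blast
  then show "\<exists>f0 f'. f = f0 \<and> (\<forall>x. (f0 has_real_derivative f' x) (at x)) \<and>
     ((\<exists>P. f' = hP P) \<or> smooth f')"
    using hP_deriv[of P] by blast
qed auto

definition hh :: "real \<Rightarrow> real" where "hh x = (if x > 0 then exp (- inverse x) else 0)"

lemma hh_hP: "hh = hP 1" by (auto simp: hh_def hP_def fun_eq_iff)

lemma smooth_hh: "smooth hh" unfolding hh_hP by (rule smooth_hP)

definition SS :: "real \<Rightarrow> real" where "SS x = hh x * inverse (hh x + hh (1 - x))"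

lemma hh_nonneg: "hh x \<ge> 0" by (simp add: hh_def)

lemma hh_den: "hh x + hh (1 - x) > 0"
  by (cases "x > 0") (auto simp: hh_def add_pos_nonneg add_nonneg_pos)

lemma smooth_SS: "smooth SS"
proof -
  have "smooth (\<lambda>x. hh ((-1) * x + 1))" by (rule smooth_affine[OF smooth_hh])
  then have "smooth (\<lambda>x. hh x + hh (1 - x))" using smooth_add[OF smooth_hh] by simp
  then have "smooth (\<lambda>x. inverse (hh x + hh (1 - x)))"
    using hh_den by (intro smooth_inverse) (auto simp: order_less_imp_not_eq2)
  then show ?thesis unfolding SS_def[abs_def] by (intro smooth_mult smooth_hh)
qed

lemma SS_bounds: "0 \<le> SS x" "SS x \<le> 1"
  using hh_den[of x] hh_nonneg[of x] hh_nonneg[of "1-x"] by (auto simp: SS_def field_simps)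

lemma SS_0: "x \<le> 0 \<Longrightarrow> SS x = 0" by (simp add: SS_def hh_def)
lemma SS_1: "x \<ge> 1 \<Longrightarrow> SS x = 1" using hh_den[of x] by (simp add: SS_def hh_def)

lemma smooth_cont: "smooth f \<Longrightarrow> continuous_on S f"
  by (meson continuous_at_imp_continuous_on differentiable_imp_continuous_within smooth_deriv(2))

lemma DSS: "(SS has_real_derivative deriv SS x) (at x)"
  using smooth_deriv(2)[OF smooth_SS] DERIV_deriv_iff_real_differentiable by blast

lemma smooth_DSS: "smooth (deriv SS)" using smooth_deriv(1)[OF smooth_SS] .

lemma DSS_0: assumes "x \<le> 0 \<or> x \<ge> 1" shows "deriv SS x = 0"
  using assms
proof
  assume "x \<le> 0"
  then show ?thesis using DERIV_local_min[OF DSS, of 1 x] SS_0 SS_bounds by auto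
next
  assume "x \<ge> 1"
  then show ?thesis using DERIV_local_max[OF DSS, of 1 x] SS_1 SS_bounds by auto
qed

lemma DSS_bound: obtains M where "\<And>u. \<bar>deriv SS u\<bar> \<le> M"
proof -
  have "continuous_on {0..1} (\<lambda>u. \<bar>deriv SS u\<bar>)"
    by (intro continuous_intros smooth_cont smooth_DSS)
  then obtain u0 where u0: "\<forall>u\<in>{0..1}. \<bar>deriv SS u\<bar> \<le> \<bar>deriv SS u0\<bar>"
    using continuous_attains_sup[of "{0..1::real}" "\<lambda>u. \<bar>deriv SS u\<bar>"] by auto
  have "\<bar>deriv SS u\<bar> \<le> \<bar>deriv SS u0\<bar>" for u
    using u0 DSS_0[of u] by (cases "u \<in> {0..1}") auto
  then show ?thesis using that by blast
qed

lemma scaled_deriv: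
  assumes "\<epsilon> > 0"
  shows "((\<lambda>t. SS ((t - z) / \<epsilon>)) has_real_derivative inverse \<epsilon> * deriv SS ((t - z) / \<epsilon>)) (at t)"
proof -
  have "((\<lambda>t. (t - z)/\<epsilon>) has_real_derivative 1/\<epsilon>) (at t)" using assms by (auto intro!: derivative_eq_intros)
  from DERIV_chain2[OF DSS this] show ?thesis by (simp add: divide_inverse mult.commute)
qed

lemma scaled_int:
  assumes "\<epsilon> > 0"
  shows "(LINT t:{z..z+\<epsilon>}|lborel. inverse \<epsilon> * deriv SS ((t - z) / \<epsilon>)) = 1"
proof -
  have c: "continuous_on S (\<lambda>t. inverse \<epsilon> * deriv SS ((t - z) / \<epsilon>))" for S
    by (intro continuous_intros continuous_on_compose2[OF smooth_cont[OF smooth_DSS, of UNIV]]) (use assms in auto)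
  have "(LBINT t=z..z+\<epsilon>. inverse \<epsilon> * deriv SS ((t - z) / \<epsilon>)) = SS ((z + \<epsilon> - z) / \<epsilon>) - SS ((z - z)/\<epsilon>)"
    by (rule interval_integral_FTC_finite[OF c])
       (auto intro!: has_field_derivative_at_within scaled_deriv assms simp: has_real_derivative_iff_has_vector_derivative[symmetric])
  also have "\<dots> = 1" using assms by (simp add: SS_0 SS_1)
  finally show ?thesis using assms by (simp add: interval_integral_Icc)
qed

lemma avg:
  assumes e: "\<epsilon> > 0" and cv: "continuous_on {z..z+\<epsilon>} v" and w: "w \<in> {z..z+\<epsilon>}"
    and close: "\<And>t. t \<in> {z..z+\<epsilon>} \<Longrightarrow> \<bar>v t - v w\<bar> \<le> r"
    and M: "\<And>u. \<bar>deriv SS u\<bar> \<le> M"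
  shows "\<bar>(LINT t:{z..z+\<epsilon>}|lborel. v t * (inverse \<epsilon> * deriv SS ((t - z) / \<epsilon>))) - v w\<bar> \<le> r * M"
proof -
  let ?T = "\<lambda>t. inverse \<epsilon> * deriv SS ((t - z) / \<epsilon>)"
  have cT: "continuous_on S ?T" for S
    by (intro continuous_intros continuous_on_compose2[OF smooth_cont[OF smooth_DSS, of UNIV]]) (use assms in auto)
  have iT: "set_integrable lborel {z..z+\<epsilon>} ?T" by (rule borel_integrable_atLeastAtMost'[OF cT])
  have ivT: "set_integrable lborel {z..z+\<epsilon>} (\<lambda>t. v t * ?T t)"
    by (rule borel_integrable_atLeastAtMost') (intro continuous_intros cv cT)
  have iwT: "set_integrable lborel {z..z+\<epsilon>} (\<lambda>t. (v t - v w) * ?T t)"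
    by (rule borel_integrable_atLeastAtMost') (intro continuous_intros cv cT)
  have eq: "(LINT t:{z..z+\<epsilon>}|lborel. v t * ?T t) - v w = (LINT t:{z..z+\<epsilon>}|lborel. (v t - v w) * ?T t)"
  proof -
    have "(LINT t:{z..z+\<epsilon>}|lborel. (v t - v w) * ?T t) =
       (LINT t:{z..z+\<epsilon>}|lborel. v t * ?T t - v w * ?T t)" by (simp add: algebra_simps)
    also have "\<dots> = (LINT t:{z..z+\<epsilon>}|lborel. v t * ?T t) - (LINT t:{z..z+\<epsilon>}|lborel. v w * ?T t)"
      using ivT iT by (intro set_integral_diff) auto
    also have "(LINT t:{z..z+\<epsilon>}|lborel. v w * ?T t) = v w"
      using scaled_int[OF e, of z] by simp
    finally show ?thesis by simp
  qed
  have pt: "\<bar>(v t - v w) * ?T t\<bar> \<le> r * M * inverse \<epsilon>" if "t \<in> {z..z+\<epsilon>}" for t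
  proof -
    have "\<bar>(v t - v w) * ?T t\<bar> = \<bar>v t - v w\<bar> * (\<bar>deriv SS ((t - z) / \<epsilon>)\<bar> * inverse \<epsilon>)"
      using e by (simp add: abs_mult)
    also have "\<dots> \<le> r * (M * inverse \<epsilon>)"
      using close[OF that] M e order_trans[OF abs_ge_zero M[of 0]] by (intro mult_mono) auto
    finally show ?thesis by simp
  qed
  have ic: "set_integrable lborel {z..z+\<epsilon>} (\<lambda>t. c)" for c :: real
    by (rule borel_integrable_atLeastAtMost') (intro continuous_intros)
  have cst: "(LINT t:{z..z+\<epsilon>}|lborel. c) = c * \<epsilon>" for c :: real
    using e by (simp add: set_integral_const)
  have up: "(LINT t:{z..z+\<epsilon>}|lborel. (v t - v w) * ?T t) \<le> r * M"
  proof -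
    have "(LINT t:{z..z+\<epsilon>}|lborel. (v t - v w) * ?T t) \<le> (LINT t:{z..z+\<epsilon>}|lborel. r * M * inverse \<epsilon>)"
      using pt by (intro set_integral_mono iwT ic) (auto simp: abs_le_iff)
    also have "\<dots> = r * M" using e cst by simp
    finally show ?thesis .
  qed
  have lo: "(LINT t:{z..z+\<epsilon>}|lborel. (v t - v w) * ?T t) \<ge> - (r * M)"
  proof -
    have "(LINT t:{z..z+\<epsilon>}|lborel. (v t - v w) * ?T t) \<ge> (LINT t:{z..z+\<epsilon>}|lborel. - (r * M * inverse \<epsilon>))"
      using pt by (intro set_integral_mono iwT ic) (force simp: abs_le_iff)
    moreover have "(LINT t:{z..z+\<epsilon>}|lborel. - (r * M * inverse \<epsilon>)) = - (r * M)" using e cst by simp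
    ultimately show ?thesis by simp
  qed
  show ?thesis using eq up lo by simp
qed

lemma g_integrable:
  assumes "H1_weak_deriv a b v g"
  shows "set_integrable lborel {a<..<b} g"
proof -
  from assms have m: "set_borel_measurable lborel {a<..<b} g"
    and sq: "set_integrable lborel {a<..<b} (\<lambda>x. (g x)\<^sup>2)"
    by (auto simp: H1_weak_deriv_def L2_on_def)
  have "set_integrable lborel {a..b} (\<lambda>x. 1::real)"
    by (rule borel_integrable_atLeastAtMost') (intro continuous_intros)
  then have one: "set_integrable lborel {a<..<b} (\<lambda>x. 1::real)"
    by (rule set_integrable_subset) auto
  have "set_integrable lborel {a<..<b} (\<lambda>x. 1 + (g x)\<^sup>2)"
    using one sq by (rule set_integral_add)
  moreover have "\<bar>g x\<bar> \<le> 1 + (g x)\<^sup>2" for x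
  proof (cases "\<bar>g x\<bar> \<le> 1")
    case True then show ?thesis by (simp add: add_increasing2)
  next
    case False
    then have "\<bar>g x\<bar> * 1 \<le> \<bar>g x\<bar> * \<bar>g x\<bar>" by (intro mult_left_mono) auto
    then show ?thesis by (simp add: power2_eq_square abs_mult_self_eq)
  qed
  ultimately show ?thesis
    by (intro set_integrable_bound[OF _ m]) auto
qed

lemma step1_r:
  assumes ab: "a < x" "x < y" "y < b" and H: "H1_weak_deriv a b v g" and cv: "continuous_on {a..b} v"
    and r: "r > 0" and M: "\<And>u. \<bar>deriv SS u\<bar> \<le> M"
  shows "\<bar>v y - v x\<bar> \<le> (LINT t:{x..y}|lborel. \<bar>g t\<bar>) + 2 * r * M"
proof -
  have xin: "x \<in> {a..b}" and yin: "y \<in> {a..b}" using ab by auto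
  obtain dx where dx: "dx > 0" "\<And>t. t \<in> {a..b} \<Longrightarrow> dist t x < dx \<Longrightarrow> dist (v t) (v x) < r"
    using cv xin r unfolding continuous_on_iff by metis
  obtain dy where dy: "dy > 0" "\<And>t. t \<in> {a..b} \<Longrightarrow> dist t y < dy \<Longrightarrow> dist (v t) (v y) < r"
    using cv yin r unfolding continuous_on_iff by metis
  define \<epsilon> where "\<epsilon> = min (min dx dy) (y - x) / 2"
  have e: "\<epsilon> > 0" "\<epsilon> < dx" "\<epsilon> < dy" "\<epsilon> \<le> y - x" using dx dy ab by (auto simp: \<epsilon>_def)
  define T1 where "T1 t = inverse \<epsilon> * deriv SS ((t - x) / \<epsilon>)" for t
  define T2 where "T2 t = inverse \<epsilon> * deriv SS ((t - (y - \<epsilon>)) / \<epsilon>)" for t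
  define \<phi> where "\<phi> t = SS ((t - x) / \<epsilon>) - SS ((t - (y - \<epsilon>)) / \<epsilon>)" for t
  have sm: "smooth \<phi>"
  proof -
    have "\<phi> = (\<lambda>t. SS (inverse \<epsilon> * t + (- x * inverse \<epsilon>)) - SS (inverse \<epsilon> * t + (- (y - \<epsilon>) * inverse \<epsilon>)))"
      by (auto simp: fun_eq_iff \<phi>_def divide_inverse algebra_simps)
    then show ?thesis by (simp only:) (rule smooth_diff; rule smooth_affine[OF smooth_SS])
  qed
  have phi0: "\<phi> t = 0" if "t \<notin> {x..y}" for t
  proof (cases "t < x")
    case True
    then have "(t - x) / \<epsilon> \<le> 0" "(t - (y - \<epsilon>)) / \<epsilon> \<le> 0" using e by (auto simp: divide_nonpos_pos)
    then show ?thesis by (simp add: \<phi>_def SS_0)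
  next
    case False
    with that have "t > y" by auto
    then have "(t - x) / \<epsilon> \<ge> 1" "(t - (y - \<epsilon>)) / \<epsilon> \<ge> 1" using e by (auto simp: field_simps)
    then show ?thesis by (simp add: \<phi>_def SS_1)
  qed
  have phib: "\<bar>\<phi> t\<bar> \<le> 1" for t
    using SS_bounds[of "(t - x) / \<epsilon>"] SS_bounds[of "(t - (y - \<epsilon>)) / \<epsilon>"] by (auto simp: \<phi>_def)
  have test: "test_fun a b \<phi>"
    unfolding test_fun_def using smooth_test_diff[OF sm] phi0 ab by blast
  have dphi: "deriv \<phi> t = T1 t - T2 t" for t
    unfolding \<phi>_def[abs_def] T1_def T2_def
    by (intro DERIV_imp_deriv DERIV_diff scaled_deriv e)
  have weak: "(LINT t:{a<..<b}|lborel. v t * deriv \<phi> t) = - (LINT t:{a<..<b}|lborel. g t * \<phi> t)"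
    using H test by (auto simp: H1_weak_deriv_def)
  have T1z: "T1 t = 0" if "t \<notin> {x..x+\<epsilon>}" for t
  proof -
    have "(t - x) / \<epsilon> \<le> 0 \<or> (t - x) / \<epsilon> \<ge> 1" using that e by (auto simp: field_simps)
    then show ?thesis by (simp add: T1_def DSS_0)
  qed
  have T2z: "T2 t = 0" if "t \<notin> {y-\<epsilon>..y}" for t
  proof -
    have "(t - (y - \<epsilon>)) / \<epsilon> \<le> 0 \<or> (t - (y - \<epsilon>)) / \<epsilon> \<ge> 1" using that e by (auto simp: field_simps)
    then show ?thesis by (simp add: T2_def DSS_0)
  qed
  have cT: "continuous_on S (\<lambda>t. inverse \<epsilon> * deriv SS ((t - z) / \<epsilon>))" for S z
    by (intro continuous_intros continuous_on_compose2[OF smooth_cont[OF smooth_DSS, of UNIV]]) (use e in auto)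
  have cv1: "continuous_on {x..x+\<epsilon>} v" using cv by (rule continuous_on_subset) (use ab e in auto)
  have cv2: "continuous_on {y-\<epsilon>..y} v" using cv by (rule continuous_on_subset) (use ab e in auto)
  have i1: "set_integrable lborel {x..x+\<epsilon>} (\<lambda>t. v t * T1 t)"
    unfolding T1_def by (rule borel_integrable_atLeastAtMost') (intro continuous_intros cv1 cT)
  have i2: "set_integrable lborel {y-\<epsilon>..y} (\<lambda>t. v t * T2 t)"
    unfolding T2_def by (rule borel_integrable_atLeastAtMost') (intro continuous_intros cv2 cT)
  have ptw: "indicator {a<..<b} t *\<^sub>R (v t * deriv \<phi> t) =
      indicator {x..x+\<epsilon>} t *\<^sub>R (v t * T1 t) - indicator {y-\<epsilon>..y} t *\<^sub>R (v t * T2 t)" for t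
  proof -
    have s1: "{x..x+\<epsilon>} \<subseteq> {a<..<b}" "{y-\<epsilon>..y} \<subseteq> {a<..<b}" using ab e by auto
    have h1: "indicator {x..x+\<epsilon>} t *\<^sub>R (v t * T1 t) = v t * T1 t"
      using T1z[of t] by (cases "t \<in> {x..x+\<epsilon>}") auto
    have h2: "indicator {y-\<epsilon>..y} t *\<^sub>R (v t * T2 t) = v t * T2 t"
      using T2z[of t] by (cases "t \<in> {y-\<epsilon>..y}") auto
    show ?thesis
    proof (cases "t \<in> {a<..<b}")
      case True
      then show ?thesis unfolding dphi h1 h2 by (simp add: algebra_simps)
    next
      case False
      then have "t \<notin> {x..x+\<epsilon>}" "t \<notin> {y-\<epsilon>..y}" using s1 by auto
      then show ?thesis using False by simp
    qed
  qed
  have lhs: "(LINT t:{a<..<b}|lborel. v t * deriv \<phi> t) =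
      (LINT t:{x..x+\<epsilon>}|lborel. v t * T1 t) - (LINT t:{y-\<epsilon>..y}|lborel. v t * T2 t)"
    unfolding set_lebesgue_integral_def ptw
    using i1 i2 unfolding set_integrable_def by (rule Bochner_Integration.integral_diff)
  have A1: "\<bar>(LINT t:{x..x+\<epsilon>}|lborel. v t * T1 t) - v x\<bar> \<le> r * M"
    unfolding T1_def
  proof (rule avg[OF e(1) cv1 _ _ M])
    show "x \<in> {x..x+\<epsilon>}" using e by auto
    fix t assume "t \<in> {x..x+\<epsilon>}"
    then have "t \<in> {a..b}" "dist t x < dx" using ab e by (auto simp: dist_real_def)
    then show "\<bar>v t - v x\<bar> \<le> r" using dx(2) by (force simp: dist_real_def)
  qed
  have A2: "\<bar>(LINT t:{y-\<epsilon>..y}|lborel. v t * T2 t) - v y\<bar> \<le> r * M"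
  proof -
    have "\<bar>v t - v y\<bar> \<le> r" if "t \<in> {y-\<epsilon>..y}" for t
    proof -
      have "t \<in> {a..b}" "dist t y < dy" using that ab e by (auto simp: dist_real_def)
      then show ?thesis using dy(2) by (force simp: dist_real_def)
    qed
    then show ?thesis using avg[OF e(1), of "y - \<epsilon>" v y r M] cv2 M e by (simp add: T2_def)
  qed
  have isub: "set_integrable lborel {x..y} g"
    by (rule set_integrable_subset[OF g_integrable[OF H]]) (use ab in auto)
  have gphi_eq: "(LINT t:{a<..<b}|lborel. g t * \<phi> t) = (LINT t:{x..y}|lborel. g t * \<phi> t)"
    unfolding set_lebesgue_integral_def
    by (rule Bochner_Integration.integral_cong) (use phi0 ab in \<open>auto simp: indicator_def\<close>)
  have mphi: "\<phi> \<in> borel_measurable borel"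
    by (intro borel_measurable_continuous_onI smooth_cont sm)
  have igphi: "set_integrable lborel {x..y} (\<lambda>t. g t * \<phi> t)"
  proof (rule set_integrable_bound[OF isub])
    have "(\<lambda>t. indicator {x..y} t *\<^sub>R g t) \<in> borel_measurable lborel"
      using isub unfolding set_integrable_def by (rule borel_measurable_integrable)
    then have "(\<lambda>t. (indicator {x..y} t *\<^sub>R g t) * \<phi> t) \<in> borel_measurable lborel"
      using mphi by measurable
    then show "set_borel_measurable lborel {x..y} (\<lambda>t. g t * \<phi> t)"
      unfolding set_borel_measurable_def by (simp add: mult.assoc)
    show "AE t in lborel. t \<in> {x..y} \<longrightarrow> norm (g t * \<phi> t) \<le> norm (g t)"
      using phib by (auto simp: abs_mult intro!: mult_left_le)
  qed
  have iag: "set_integrable lborel {x..y} (\<lambda>t. \<bar>g t\<bar>)" using isub by (rule set_integrable_abs)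
  have pw: "g t * \<phi> t \<le> \<bar>g t\<bar>" "(-1) * \<bar>g t\<bar> \<le> g t * \<phi> t" for t
  proof -
    have "\<bar>g t * \<phi> t\<bar> \<le> \<bar>g t\<bar>" using phib[of t] by (simp add: abs_mult mult_left_le)
    then show "g t * \<phi> t \<le> \<bar>g t\<bar>" "(-1) * \<bar>g t\<bar> \<le> g t * \<phi> t" by (auto simp: abs_le_iff)
  qed
  have G1: "(LINT t:{x..y}|lborel. g t * \<phi> t) \<le> (LINT t:{x..y}|lborel. \<bar>g t\<bar>)"
    by (rule set_integral_mono[OF igphi iag pw(1)])
  have G2: "(LINT t:{x..y}|lborel. (-1) * \<bar>g t\<bar>) \<le> (LINT t:{x..y}|lborel. g t * \<phi> t)"
    by (rule set_integral_mono[OF set_integrable_mult_right[OF iag] igphi pw(2)])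
  then have G2: "- (LINT t:{x..y}|lborel. \<bar>g t\<bar>) \<le> (LINT t:{x..y}|lborel. g t * \<phi> t)"
    using set_integral_uminus[OF iag] by simp
  show ?thesis using weak lhs A1 A2 G1 G2 gphi_eq by linarith
qed

lemma step1:
  assumes ab: "a < x" "x < y" "y < b" and H: "H1_weak_deriv a b v g" and cv: "continuous_on {a..b} v"
  shows "\<bar>v y - v x\<bar> \<le> (LINT t:{x..y}|lborel. \<bar>g t\<bar>)"
proof (rule field_le_epsilon)
  obtain M where M: "\<And>u. \<bar>deriv SS u\<bar> \<le> M" using DSS_bound by blast
  have M0: "M \<ge> 0" using M[of 0] by linarith
  fix e :: real assume e: "e > 0"
  define r where "r = e / (2 * (M + 1))"
  have r: "r > 0" using e M0 by (simp add: r_def)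
  have "2 * r * M \<le> e" using e M0 by (simp add: r_def field_simps)
  then show "\<bar>v y - v x\<bar> \<le> (LINT t:{x..y}|lborel. \<bar>g t\<bar>) + e"
    using step1_r[OF ab H cv r M] by linarith
qed

lemma set_integral_mono_set:
  fixes f :: "real \<Rightarrow> real"
  assumes "set_integrable M B f" "A \<in> sets M" "A \<subseteq> B" "\<And>x. x \<in> B \<Longrightarrow> f x \<ge> 0"
  shows "(LINT x:A|M. f x) \<le> (LINT x:B|M. f x)"
proof -
  have iA: "set_integrable M A f" by (rule set_integrable_subset[OF assms(1-3)])
  show ?thesis
    unfolding set_lebesgue_integral_def
    using iA assms(1) unfolding set_integrable_def
    by (rule integral_mono) (use assms(3,4) in \<open>auto simp: indicator_def\<close>)
qed

lemma amgm:
  fixes K A B :: real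
  assumes "K \<ge> 0" "A \<ge> 0" "B \<ge> 0" "\<And>l. l > 0 \<Longrightarrow> 2 * K \<le> l * A + B / l"
  shows "K\<^sup>2 \<le> A * B"
proof (cases "K = 0")
  case True then show ?thesis using assms by simp
next
  case False
  then have K: "K > 0" using assms by simp
  show ?thesis
  proof (cases "A = 0")
    case True
    define l where "l = B / K + 1"
    have l: "l > 0" using K assms by (simp add: l_def add_nonneg_pos)
    have "B < K * l" using K by (simp add: l_def field_simps)
    then have "B / l < K" using l by (simp add: field_simps)
    then show ?thesis using assms(4)[OF l] True K by simp
  next
    case False
    then have A: "A > 0" using assms by simp
    have "2 * K \<le> (K / A) * A + B / (K / A)" using assms(4)[of "K / A"] K A by simp
    then have "K \<le> B * A / K" using A K by (simp add: field_simps)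
    then have "K * K \<le> B * A" using K by (simp add: field_simps)
    then show ?thesis by (simp add: power2_eq_square mult.commute)
  qed
qed

lemma set_integral_nonneg':
  fixes f :: "real \<Rightarrow> real"
  assumes "\<And>x. x \<in> A \<Longrightarrow> f x \<ge> 0"
  shows "(LINT x:A|M. f x) \<ge> 0"
  unfolding set_lebesgue_integral_def
  by (rule Bochner_Integration.integral_nonneg) (use assms in \<open>auto simp: indicator_def\<close>)

lemma compact_level:
  fixes v :: "real \<Rightarrow> real"
  assumes "continuous_on {a..b} v" "c \<le> d" "{c..d} \<subseteq> {a..b}"
  shows "compact {t \<in> {c..d}. v t = y}"
proof -
  have "closed {t \<in> {c..d}. v t = y}"
    by (rule continuous_closed_preimage_constant[OF continuous_on_subset[OF assms(1,3)]]) simp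
  moreover have "bounded {t \<in> {c..d}. v t = y}" by (rule bounded_subset[OF compact_imp_bounded[OF compact_Icc]]) auto
  ultimately show ?thesis by (simp add: compact_eq_bounded_closed)
qed

theorem lemma2p1:
  fixes a b :: real and v g :: "real \<Rightarrow> real"
  assumes "a < b"
    and "H1_weak_deriv a b v g"
    and "continuous_on {a..b} v"
  defines "v0 \<equiv> Inf (v ` {a..b})"
    and "v1 \<equiv> Sup (v ` {a..b})"
    and "I \<equiv> {s \<in> {a..b}. Inf (v ` {a..b}) < v s \<and> v s < Sup (v ` {a..b})}"
  shows "(LINT s:I|lborel. (v s - v0)\<^sup>2) \<le> (measure lborel I)\<^sup>2 * (LINT s:I|lborel. (g s)\<^sup>2)"
proof -
  note ab = assms(1) and H = assms(2) and cv = assms(3)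
  have ne: "{a..b} \<noteq> {}" using ab by simp
  obtain m where m: "m \<in> {a..b}" "\<forall>t\<in>{a..b}. v m \<le> v t"
    using continuous_attains_inf[OF compact_Icc ne cv] by blast
  obtain M1 where M1: "M1 \<in> {a..b}" "\<forall>t\<in>{a..b}. v t \<le> v M1"
    using continuous_attains_sup[OF compact_Icc ne cv] by blast
  have v0m: "v0 = v m" unfolding v0_def by (rule cInf_eq_minimum) (use m in auto)
  have v1M: "v1 = v M1" unfolding v1_def by (rule cSup_eq_maximum) (use M1 in auto)
  have Idef: "I = {s \<in> {a..b}. v0 < v s \<and> v s < v1}" unfolding I_def v0_def v1_def ..
  have vlo: "v0 \<le> v t" and vhi: "v t \<le> v1" if "t \<in> {a..b}" for t
    using m M1 that v0m v1M by auto
  have Isub: "I \<subseteq> {a..b}" unfolding Idef by auto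
  define w where "w s = indicator {a..b} s *\<^sub>R v s" for s
  have wm: "w \<in> borel_measurable borel"
    unfolding w_def[abs_def] by (rule borel_measurable_continuous_on_indicator) (auto intro: cv)
  have "I = {a..b} \<inter> (w -` {v0<..} \<inter> space borel) \<inter> (w -` {..<v1} \<inter> space borel)"
    by (auto simp: Idef w_def indicator_def)
  moreover have "w -` {v0<..} \<inter> space borel \<in> sets borel" "w -` {..<v1} \<inter> space borel \<in> sets borel"
    using measurable_sets[OF wm] by auto
  ultimately have Isets: "I \<in> sets lborel" by simp
  have finI: "emeasure lborel I \<noteq> \<infinity>"
  proof -
    have "emeasure lborel I \<le> emeasure lborel {a..b}" by (rule emeasure_mono[OF Isub]) simp
    then show ?thesis using ab by (auto simp: top_unique)
  qed
  have ab_diff: "({a..b} - {a<..<b}) \<union> ({a<..<b} - {a..b}) \<subseteq> {a, b}" by auto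
  have gab: "set_integrable lborel {a..b} g"
    using set_integrable_discrete_difference[of "{a,b}" "{a..b}" "{a<..<b}" lborel g] ab_diff g_integrable[OF H] by auto
  have g2ab': "set_integrable lborel {a<..<b} (\<lambda>s. (g s)\<^sup>2)"
    using H by (auto simp: H1_weak_deriv_def L2_on_def)
  have g2ab: "set_integrable lborel {a..b} (\<lambda>s. (g s)\<^sup>2)"
    using set_integrable_discrete_difference[of "{a,b}" "{a..b}" "{a<..<b}" lborel "\<lambda>s. (g s)\<^sup>2"] ab_diff g2ab' by auto
  have gI: "set_integrable lborel I (\<lambda>s. \<bar>g s\<bar>)"
    using set_integrable_abs[OF set_integrable_subset[OF gab Isets Isub]] .
  have g2I: "set_integrable lborel I (\<lambda>s. (g s)\<^sup>2)"
    by (rule set_integrable_subset[OF g2ab Isets Isub])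
  define K where "K = (LINT s:I|lborel. \<bar>g s\<bar>)"
  have K0: "K \<ge> 0" unfolding K_def by (rule set_integral_nonneg') auto
  have P: "\<bar>v q - v p\<bar> \<le> K" if pq: "a \<le> p" "p < q" "q \<le> b" "{p<..<q} \<subseteq> I" for p q
  proof (rule field_le_epsilon)
    fix e :: real assume e: "e > 0"
    have pin: "p \<in> {a..b}" and qin: "q \<in> {a..b}" using pq by auto
    obtain dp where dp: "dp > 0" "\<And>t. t \<in> {a..b} \<Longrightarrow> dist t p < dp \<Longrightarrow> dist (v t) (v p) < e / 2"
      using cv pin e unfolding continuous_on_iff by (metis half_gt_zero)
    obtain dq where dq: "dq > 0" "\<And>t. t \<in> {a..b} \<Longrightarrow> dist t q < dq \<Longrightarrow> dist (v t) (v q) < e / 2"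
      using cv qin e unfolding continuous_on_iff by (metis half_gt_zero)
    define d where "d = min (min dp dq) ((q - p) / 3) / 2"
    have d: "d > 0" "d < dp" "d < dq" "d < (q - p) / 3"
    proof -
      let ?mm = "min (min dp dq) ((q - p) / 3)"
      have m0: "?mm > 0" using dp dq pq by auto
      have "?mm \<le> dp" "?mm \<le> dq" "?mm \<le> (q - p) / 3" by (simp_all only: min.cobounded1 min.cobounded2 min.coboundedI1)
      then show "d > 0" "d < dp" "d < dq" "d < (q - p) / 3" using m0 unfolding d_def by linarith+
    qed
    have s1: "\<bar>v (q - d) - v (p + d)\<bar> \<le> (LINT t:{p+d..q-d}|lborel. \<bar>g t\<bar>)"
      by (rule step1[OF _ _ _ H cv]) (use pq d in auto)
    have s2: "(LINT t:{p+d..q-d}|lborel. \<bar>g t\<bar>) \<le> K"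
      unfolding K_def by (rule set_integral_mono_set[OF gI]) (use pq d in auto)
    have "dist (v (p + d)) (v p) < e / 2" by (rule dp(2)) (use pq d in \<open>auto simp: dist_real_def\<close>)
    moreover have "dist (v (q - d)) (v q) < e / 2" by (rule dq(2)) (use pq d in \<open>auto simp: dist_real_def\<close>)
    ultimately show "\<bar>v q - v p\<bar> \<le> K + e" using s1 s2 unfolding dist_real_def by argo
  qed
  have S3: "v s - v0 \<le> K" if sI: "s \<in> I" for s
  proof -
    have sab: "s \<in> {a..b}" and vs: "v0 < v s" "v s < v1" using sI Idef by auto
    have ms: "m \<noteq> s" using vs v0m by auto
    show ?thesis
    proof (cases "m < s")
      case True
      define Z where "Z = {t \<in> {m..s}. v t = v0}"
      have cZ: "compact Z" unfolding Z_def by (rule compact_level[OF cv]) (use True m sab in auto)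
      have "m \<in> Z" using True v0m by (auto simp: Z_def)
      then obtain p where p: "p \<in> Z" "\<forall>t\<in>Z. t \<le> p" using compact_attains_sup[OF cZ] by blast
      have pZ: "m \<le> p" "p \<le> s" "v p = v0" using p(1) by (auto simp: Z_def)
      have ps: "p < s" using pZ vs by (cases "p = s") auto
      define W where "W = {t \<in> {p..s}. v t = v1}"
      show ?thesis
      proof (cases "W = {}")
        case True
        have "{p<..<s} \<subseteq> I"
        proof
          fix t assume t: "t \<in> {p<..<s}"
          then have tab: "t \<in> {a..b}" using pZ m sab by auto
          have "v t \<noteq> v0"
          proof
            assume "v t = v0"
            then have "t \<in> Z" using t pZ by (auto simp: Z_def)
            then show False using p(2) t by fastforce
          qed
          moreover have "v t \<noteq> v1" using True t by (auto simp: W_def)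
          ultimately show "t \<in> I" using vlo[OF tab] vhi[OF tab] tab by (auto simp: Idef)
        qed
        then have "\<bar>v s - v p\<bar> \<le> K" using P[of p s] ps pZ m sab by auto
        then show ?thesis using pZ by auto
      next
        case False
        have cW: "compact W" unfolding W_def by (rule compact_level[OF cv]) (use ps pZ m sab in auto)
        obtain q where q: "q \<in> W" "\<forall>t\<in>W. q \<le> t" using compact_attains_inf[OF cW False] by blast
        have qW: "p \<le> q" "q \<le> s" "v q = v1" using q(1) by (auto simp: W_def)
        have pq: "p < q" using qW pZ vs by (cases "p = q") auto
        have "{p<..<q} \<subseteq> I"
        proof
          fix t assume t: "t \<in> {p<..<q}"
          then have tab: "t \<in> {a..b}" using pZ qW m sab by auto
          have "v t \<noteq> v0"
          proof
            assume "v t = v0"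
            then have "t \<in> Z" using t pZ qW by (auto simp: Z_def)
            then show False using p(2) t by fastforce
          qed
          moreover have "v t \<noteq> v1"
          proof
            assume "v t = v1"
            then have "t \<in> W" using t pZ qW by (auto simp: W_def)
            then show False using q(2) t by fastforce
          qed
          ultimately show "t \<in> I" using vlo[OF tab] vhi[OF tab] tab by (auto simp: Idef)
        qed
        then have "\<bar>v q - v p\<bar> \<le> K" using P[of p q] pq pZ qW m sab by auto
        then show ?thesis using pZ qW vs by auto
      qed
    next
      case False
      then have sm: "s < m" using ms by auto
      define Z where "Z = {t \<in> {s..m}. v t = v0}"
      have cZ: "compact Z" unfolding Z_def by (rule compact_level[OF cv]) (use sm m sab in auto)
      have "m \<in> Z" using sm v0m by (auto simp: Z_def)
      then obtain p where p: "p \<in> Z" "\<forall>t\<in>Z. p \<le> t" using compact_attains_inf[OF cZ] by blast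
      have pZ: "s \<le> p" "p \<le> m" "v p = v0" using p(1) by (auto simp: Z_def)
      have ps: "s < p" using pZ vs by (cases "p = s") auto
      define W where "W = {t \<in> {s..p}. v t = v1}"
      show ?thesis
      proof (cases "W = {}")
        case True
        have "{s<..<p} \<subseteq> I"
        proof
          fix t assume t: "t \<in> {s<..<p}"
          then have tab: "t \<in> {a..b}" using pZ m sab by auto
          have "v t \<noteq> v0"
          proof
            assume "v t = v0"
            then have "t \<in> Z" using t pZ by (auto simp: Z_def)
            then show False using p(2) t by fastforce
          qed
          moreover have "v t \<noteq> v1" using True t by (auto simp: W_def)
          ultimately show "t \<in> I" using vlo[OF tab] vhi[OF tab] tab by (auto simp: Idef)
        qed
        then have "\<bar>v p - v s\<bar> \<le> K" using P[of s p] ps pZ m sab by auto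
        then show ?thesis using pZ by auto
      next
        case False
        have cW: "compact W" unfolding W_def by (rule compact_level[OF cv]) (use ps pZ m sab in auto)
        obtain q where q: "q \<in> W" "\<forall>t\<in>W. t \<le> q" using compact_attains_sup[OF cW False] by blast
        have qW: "s \<le> q" "q \<le> p" "v q = v1" using q(1) by (auto simp: W_def)
        have pq: "q < p" using qW pZ vs by (cases "p = q") auto
        have "{q<..<p} \<subseteq> I"
        proof
          fix t assume t: "t \<in> {q<..<p}"
          then have tab: "t \<in> {a..b}" using pZ qW m sab by auto
          have "v t \<noteq> v0"
          proof
            assume "v t = v0"
            then have "t \<in> Z" using t pZ qW by (auto simp: Z_def)
            then show False using p(2) t by fastforce
          qed
          moreover have "v t \<noteq> v1"
          proof
            assume "v t = v1"
            then have "t \<in> W" using t pZ qW by (auto simp: W_def)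
            then show False using q(2) t by fastforce
          qed
          ultimately show "t \<in> I" using vlo[OF tab] vhi[OF tab] tab by (auto simp: Idef)
        qed
        then have "\<bar>v p - v q\<bar> \<le> K" using P[of q p] pq pZ qW m sab by auto
        then show ?thesis using pZ qW vs by auto
      qed
    qed
  qed
  have i2: "set_integrable lborel I (\<lambda>s. (v s - v0)\<^sup>2)"
    by (rule set_integrable_subset[OF borel_integrable_atLeastAtMost' Isets Isub])
       (intro continuous_intros cv)
  have iK: "set_integrable lborel I (\<lambda>s. K\<^sup>2)"
    by (rule set_integrable_subset[OF borel_integrable_atLeastAtMost' Isets Isub])
       (intro continuous_intros)
  have st4: "(LINT s:I|lborel. (v s - v0)\<^sup>2) \<le> (LINT s:I|lborel. K\<^sup>2)"
  proof (rule set_integral_mono[OF i2 iK])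
    fix s assume "s \<in> I"
    then have "0 \<le> v s - v0" "v s - v0 \<le> K" using S3 Idef by auto
    then show "(v s - v0)\<^sup>2 \<le> K\<^sup>2" by (intro power_mono) auto
  qed
  have cst: "(LINT s:I|lborel. c) = measure lborel I * c" for c :: real
    using set_integral_const[OF Isets finI, of c] by simp
  define A where "A = (LINT s:I|lborel. (g s)\<^sup>2)"
  have A0: "A \<ge> 0" unfolding A_def by (rule set_integral_nonneg') auto
  have st5: "K\<^sup>2 \<le> A * measure lborel I"
  proof (rule amgm[OF K0 A0 measure_nonneg])
    fix l :: real assume l: "l > 0"
    have pw: "2 * \<bar>g s\<bar> \<le> l * (g s)\<^sup>2 + inverse l" for s
    proof -
      have "0 \<le> (l * \<bar>g s\<bar> - 1)\<^sup>2" by simp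
      then have "2 * l * \<bar>g s\<bar> \<le> l * (l * (g s)\<^sup>2) + 1"
        by (simp add: power2_eq_square algebra_simps)
      then have "l * (2 * \<bar>g s\<bar>) \<le> l * (l * (g s)\<^sup>2 + inverse l)"
        using l by (simp add: algebra_simps)
      then show ?thesis using l by simp
    qed
    have i1: "set_integrable lborel I (\<lambda>s. 2 * \<bar>g s\<bar>)" using gI by simp
    have ic: "set_integrable lborel I (\<lambda>s. inverse l)"
      by (rule set_integrable_subset[OF borel_integrable_atLeastAtMost' Isets Isub]) (intro continuous_intros)
    have i3: "set_integrable lborel I (\<lambda>s. l * (g s)\<^sup>2 + inverse l)"
      by (rule set_integral_add(1)) (use g2I ic in auto)
    have "(LINT s:I|lborel. 2 * \<bar>g s\<bar>) \<le> (LINT s:I|lborel. l * (g s)\<^sup>2 + inverse l)"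
      by (rule set_integral_mono[OF i1 i3 pw])
    also have "\<dots> = l * A + measure lborel I * inverse l"
      using g2I set_integrable_subset[OF borel_integrable_atLeastAtMost'[of a b "\<lambda>_. inverse l"] Isets Isub]
      by (subst set_integral_add(2)) (auto simp: A_def cst)
    finally show "2 * K \<le> l * A + measure lborel I / l" by (simp add: K_def divide_inverse)
  qed
  have "(LINT s:I|lborel. (v s - v0)\<^sup>2) \<le> measure lborel I * K\<^sup>2" using st4 cst by simp
  also have "\<dots> \<le> measure lborel I * (A * measure lborel I)"
    by (rule mult_left_mono[OF st5 measure_nonneg])
  also have "\<dots> = (measure lborel I)\<^sup>2 * (LINT s:I|lborel. (g s)\<^sup>2)"
    by (simp add: A_def power2_eq_square)
  finally show ?thesis .
qed

end
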